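(* Let $\mathcal A$ be a finite alphabet and let $\Psi$ be a symmetry on $\mathcal A^*$. Then $|\Psi(w)|=|w|$ for every $w\in\mathcal A^*$.
   Context: A symmetry on $\mathcal A^*$ is a map $\Psi:\mathcal A^*\to\mathcal A^*$ such that (1) $\Psi$ is a bijection and (2) for all $w,v\in\mathcal A^*$, the number of occurrences of $w$ in $v$ equals the number of occurrences of $\Psi(w)$ in $\Psi(v)$ (an occurrence of $w$ in $v=v_1\cdots v_m$ is an index $i$ such that $w$ is a prefix of $v_iv_{i+1}\cdots v_m$). $|w|$ denotes the length of $w$. *)

theory Defs
  imports Main "HOL-Library.Sublist"
begin

definition occ :: "'a list \<Rightarrow> 'a list \<Rightarrow> nat" where
  "occ w v = card {i. i < length v \<and> prefix w (drop i v)}"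

definition symmetry :: "('a list \<Rightarrow> 'a list) \<Rightarrow> bool" where
  "symmetry \<Psi> \<longleftrightarrow> bij \<Psi> \<and> (\<forall>w v. occ w v = occ (\<Psi> w) (\<Psi> v))"

end

theory Submission
  imports Defs
begin

lemma occ_Nil_right: "occ w [] = 0"
  by (simp add: occ_def)

lemma occ_Nil_left: "occ [] v = length v"
  by (simp add: occ_def)

theorem lemma14:
  fixes \<Psi> :: "('a::finite) list \<Rightarrow> 'a list"
  assumes "symmetry \<Psi>"
  shows "length (\<Psi> w) = length w"
proof -
  have b: "bij \<Psi>" and o: "\<And>w v. occ w v = occ (\<Psi> w) (\<Psi> v)"
    using assms by (auto simp: symmetry_def)
  obtain z where z: "\<Psi> z = []" using b by (metis bij_pointE)
  have "length z = 0" using o[of "[]" z] by (simp add: z occ_Nil_left occ_Nil_right)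
  hence "\<Psi> [] = []" using z by simp
  thus ?thesis using o[of "[]" w] by (simp add: occ_Nil_left)
qed

end
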